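(* Let $X$ be a topological space, $\mathcal{F}$ a filter base on $X$ stable under countable intersections, and $K\subseteq X$ compact. If $\mathcal{F}\vee G_\delta(K):=\{F_0\cap F_1: F_0,F_1\in\mathcal{F}\cup G_\delta(K)\}$ is a filter base, then it is a total filter base stable under countable intersections.
   Context: A filter base on $X$ is a nonempty $\mathcal{F}\subseteq\mathcal{P}(X)$ with $\emptyset\notin\mathcal{F}$ and closed under pairwise intersections; it is stable under countable intersections if for every countable $S\subseteq\mathcal{F}$ there is $H\in\mathcal{F}$ with $H\subseteq\bigcap S$. $G_\delta(K)=\{G\subseteq X: K\subseteq G,\ G\text{ is a countable intersection of open subsets of }X\}$. $ad(\mathcal{F})=\bigcap\{\overline{F}:F\in\mathcal{F}\}$; $\mathcal{F}$ is total if every filter base $\mathcal{H}\supseteq\mathcal{F}$ satisfies $ad(\mathcal{H})\neq\emptyset$. *)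

theory Defs
  imports "HOL-Analysis.Analysis"
begin

definition filter_base :: "'a topology \<Rightarrow> 'a set set \<Rightarrow> bool" where
  "filter_base X F \<longleftrightarrow> F \<noteq> {} \<and> F \<subseteq> Pow (topspace X) \<and> {} \<notin> F \<and>
     (\<forall>A\<in>F. \<forall>B\<in>F. A \<inter> B \<in> F)"

definition countably_stable :: "'a set set \<Rightarrow> bool" where
  "countably_stable F \<longleftrightarrow>
     (\<forall>S. countable S \<and> S \<subseteq> F \<longrightarrow> (\<exists>H\<in>F. H \<subseteq> \<Inter>S))"

text \<open>G_delta(K): countable intersections of open subsets of X containing K.
  The empty intersection is read as X itself.\<close>
definition Gdelta_nbhds :: "'a topology \<Rightarrow> 'a set \<Rightarrow> 'a set set" where
  "Gdelta_nbhds X K = {G. K \<subseteq> G \<and>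
     (\<exists>U. countable U \<and> (\<forall>u\<in>U. openin X u) \<and> G = topspace X \<inter> \<Inter>U)}"

definition adherence :: "'a topology \<Rightarrow> 'a set set \<Rightarrow> 'a set" where
  "adherence X F = topspace X \<inter> \<Inter>{X closure_of A | A. A \<in> F}"

definition total_fb :: "'a topology \<Rightarrow> 'a set set \<Rightarrow> bool" where
  "total_fb X F \<longleftrightarrow> (\<forall>H. filter_base X H \<and> F \<subseteq> H \<longrightarrow> adherence X H \<noteq> {})"

definition join_fb :: "'a set set \<Rightarrow> 'a set set \<Rightarrow> 'a set set" where
  "join_fb F G = {A \<inter> B | A B. A \<in> F \<union> G \<and> B \<in> F \<union> G}"

end

theory Submission
  imports Defs
begin

lemma fin_inter_in:
  assumes fb: "filter_base X H" and T: "topspace X \<in> H"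
  shows "finite C \<Longrightarrow> A ` C \<subseteq> H \<Longrightarrow> topspace X \<inter> \<Inter>(A ` C) \<in> H"
proof (induction C rule: finite_induct)
  case empty then show ?case using T by simp
next
  case (insert x C)
  then have "A x \<inter> (topspace X \<inter> \<Inter>(A ` C)) \<in> H"
    using fb unfolding filter_base_def by blast
  moreover have "A x \<inter> (topspace X \<inter> \<Inter>(A ` C)) = topspace X \<inter> \<Inter>(A ` insert x C)" by auto
  ultimately show ?case by simp
qed

theorem proposition2p2:
  fixes X :: "'a topology" and F :: "'a set set" and K :: "'a set"
  assumes "filter_base X F"
    and "countably_stable F"
    and "compactin X K"
    and "filter_base X (join_fb F (Gdelta_nbhds X K))"
  shows "total_fb X (join_fb F (Gdelta_nbhds X K))
         \<and> countably_stable (join_fb F (Gdelta_nbhds X K))"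
proof
  define G where "G = Gdelta_nbhds X K"
  define J where "J = join_fb F G"
  have KT: "K \<subseteq> topspace X" using assms(3) compactin_subset_topspace by blast
  have GJ: "G \<subseteq> J" unfolding J_def join_fb_def by blast
  have FJ: "F \<subseteq> J" unfolding J_def join_fb_def by blast
  have TG: "topspace X \<in> G" unfolding G_def Gdelta_nbhds_def using KT
    by (auto intro!: exI[of _ "{}"])
  show "total_fb X (join_fb F (Gdelta_nbhds X K))"
    unfolding total_fb_def
  proof (intro allI impI)
    fix H assume H: "filter_base X H \<and> join_fb F (Gdelta_nbhds X K) \<subseteq> H"
    then have fbH: "filter_base X H" and JH: "J \<subseteq> H" unfolding J_def G_def by auto
    have HP: "\<And>A. A \<in> H \<Longrightarrow> A \<subseteq> topspace X" using fbH unfolding filter_base_def by blast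
    show "adherence X H \<noteq> {}"
    proof
      assume ad: "adherence X H = {}"
      have "\<forall>x\<in>K. \<exists>A\<in>H. x \<notin> X closure_of A"
        using ad KT unfolding adherence_def by blast
      then obtain A where A: "\<And>x. x \<in> K \<Longrightarrow> A x \<in> H \<and> x \<notin> X closure_of A x"
        by metis
      define V where "V x = topspace X - X closure_of A x" for x
      have Vo: "\<And>x. openin X (V x)" unfolding V_def by (simp add: openin_diff)
      have "K \<subseteq> \<Union>(V ` K)" using A KT unfolding V_def by blast
      then obtain F' where F': "finite F'" "F' \<subseteq> V ` K" "K \<subseteq> \<Union>F'"
        using assms(3) Vo unfolding compactin_def by (metis imageE)
      then obtain C where C: "C \<subseteq> K" "finite C" "F' = V ` C"
        by (meson finite_subset_image)
      define W where "W = \<Union>(V ` C)"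
      have Wo: "openin X W" unfolding W_def using Vo by blast
      have "W \<in> G" unfolding G_def Gdelta_nbhds_def W_def
        using F' C Wo W_def openin_subset
        by (auto intro!: exI[of _ "{W}"] simp: W_def V_def)
      then have WH: "W \<in> H" using GJ JH by blast
      have AH: "topspace X \<inter> \<Inter>(A ` C) \<in> H"
        apply (rule fin_inter_in[OF fbH])
        using TG GJ JH C A by auto
      have "W \<inter> (topspace X \<inter> \<Inter>(A ` C)) \<in> H"
        using WH AH fbH unfolding filter_base_def by blast
      moreover have "W \<inter> (topspace X \<inter> \<Inter>(A ` C)) = {}"
      proof -
        { fix y i assume i: "i \<in> C" and y: "y \<in> V i" "y \<in> A i"
          have "A i \<subseteq> topspace X" using HP A C i by blast
          then have "y \<in> X closure_of A i" using y closure_of_subset by blast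
          then have False using y unfolding V_def by blast }
        then show ?thesis unfolding W_def by blast
      qed
      ultimately show False using fbH unfolding filter_base_def by auto
    qed
  qed
  show "countably_stable (join_fb F (Gdelta_nbhds X K))"
    unfolding countably_stable_def
  proof (intro allI impI)
    fix S assume S: "countable S \<and> S \<subseteq> join_fb F (Gdelta_nbhds X K)"
    then have "\<forall>s\<in>S. \<exists>a b. s = a \<inter> b \<and> a \<in> F \<union> G \<and> b \<in> F \<union> G"
      unfolding join_fb_def G_def by blast
    then obtain a b where ab: "\<And>s. s \<in> S \<Longrightarrow> s = a s \<inter> b s \<and> a s \<in> F \<union> G \<and> b s \<in> F \<union> G"
      by metis
    define P where "P = a ` S \<union> b ` S"
    have cP: "countable P" using S unfolding P_def by auto
    have PFG: "P \<subseteq> F \<union> G" using ab unfolding P_def by auto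
    obtain HF where HF: "HF \<in> F" "HF \<subseteq> \<Inter>(P \<inter> F)"
      using assms(2) cP unfolding countably_stable_def by (meson countable_Int1 inf_le2)
    have "\<forall>g\<in>P \<inter> G. \<exists>U. countable U \<and> (\<forall>u\<in>U. openin X u) \<and> g = topspace X \<inter> \<Inter>U"
      unfolding G_def Gdelta_nbhds_def by blast
    then obtain U where U: "\<And>g. g \<in> P \<inter> G \<Longrightarrow> countable (U g) \<and> (\<forall>u\<in>U g. openin X u) \<and> g = topspace X \<inter> \<Inter>(U g)"
      by metis
    define HG where "HG = topspace X \<inter> \<Inter>(\<Union>(U ` (P \<inter> G)))"
    have KG: "\<And>g. g \<in> G \<Longrightarrow> K \<subseteq> g" unfolding G_def Gdelta_nbhds_def by blast
    have "HG \<in> G" unfolding G_def Gdelta_nbhds_def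
    proof (intro CollectI conjI exI)
      show "countable (\<Union>(U ` (P \<inter> G)))" using cP U by auto
      show "\<forall>u\<in>\<Union>(U ` (P \<inter> G)). openin X u" using U by blast
      show "HG = topspace X \<inter> \<Inter>(\<Union>(U ` (P \<inter> G)))" by (simp add: HG_def)
      show "K \<subseteq> HG" unfolding HG_def
      proof
        fix x assume x: "x \<in> K"
        have "\<And>g. g \<in> P \<inter> G \<Longrightarrow> x \<in> topspace X \<inter> \<Inter>(U g)" using U KG x by blast
        then show "x \<in> topspace X \<inter> \<Inter>(\<Union>(U ` (P \<inter> G)))" using x KT by blast
      qed
    qed
    have HGsub: "\<And>g. g \<in> P \<inter> G \<Longrightarrow> HG \<subseteq> g"
    proof -
      fix g assume g: "g \<in> P \<inter> G"
      show "HG \<subseteq> g" using U[OF g] g unfolding HG_def by blast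
    qed
    have "HF \<inter> HG \<in> join_fb F (Gdelta_nbhds X K)"
      using HF `HG \<in> G` unfolding join_fb_def G_def by blast
    moreover have "HF \<inter> HG \<subseteq> \<Inter>S"
    proof
      fix y assume y: "y \<in> HF \<inter> HG"
      { fix s assume s: "s \<in> S"
        have "\<And>p. p \<in> P \<Longrightarrow> y \<in> p"
        proof -
          fix p assume p: "p \<in> P"
          show "y \<in> p"
          proof (cases "p \<in> F")
            case True then show ?thesis using HF y p by blast
          next
            case False then have "p \<in> P \<inter> G" using PFG p by blast
            then show ?thesis using HGsub y by blast
          qed
        qed
        then have "y \<in> s" using ab[OF s] s unfolding P_def by auto }
      then show "y \<in> \<Inter>S" by blast
    qed
    ultimately show "\<exists>H\<in>join_fb F (Gdelta_nbhds X K). H \<subseteq> \<Inter>S" by blast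
  qed
qed

end
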